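(* Let $n,k,t$ be positive integers with $k\cdot t=\frac{n(n+1)}{2}$ and $t\ge n$. Then the recursive procedure $\Pi\mathit{Solve}$ (defined in the context) terminates on input $(n,k,t)$ and outputs sets $T_1,\ldots,T_k$ which are pairwise disjoint, satisfy $\{1,\ldots,n\}\subseteq \bigcup_{j=1}^k T_j\subseteq\{0,1,\ldots,n\}$, and satisfy $\sum_{x\in T_j}x=t$ for every $1\le j\le k$. Consequently the sets $T_j\setminus\{0\}$, $1\le j\le k$, form a $(k,t)$-partitioning of $\{1,\ldots,n\}$.
   Context: For integers $n,k,t$, a $(k,t)$-partitioning of $\{1,\ldots,n\}$ is a family of $k$ pairwise disjoint sets $T_1,\ldots,T_k$ with union $\{1,\ldots,n\}$ and $\sum_{x\in T_j}x=t$ for all $j$. The procedure $\Pi\mathit{Solve}(n,k,t)$ returns a list of $k$ sets and is defined recursively as follows. (Base cases.) If $k=0$, return the empty list. If $k=1$, return the single set $\{1,\ldots,n\}$ (empty if $n\le 0$). (Case $t\le 2n-1$, $t$ even.) Let $a=\frac{2n-t}{2}$. For $1\le i\le a$ put $T_i=\{t-n+(i-1),\,n-(i-1)\}$. Let $n'=t-n-1$, $k'=2(k-n)+t-1$, $t'=t/2$, and let $(S_1,\ldots,S_{k'})=\Pi\mathit{Solve}(n',k',t')$. Put $T_{a+1}=\{t/2\}\cup S_1$ and, for $2\le m\le k-a$, $T_{a+m}=S_{2m-2}\cup S_{2m-1}$. Return $(T_1,\ldots,T_k)$. (Case $t\le 2n-1$, $t$ odd.) Let $a=\frac{2n-t+1}{2}$.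 For $1\le i\le a$ put $T_i=\{t-n+(i-1),\,n-(i-1)\}$. Let $(S_1,\ldots,S_{k-a})=\Pi\mathit{Solve}(t-n-1,\,k-a,\,t)$ and put $T_{a+m}=S_m$ for $1\le m\le k-a$. Return $(T_1,\ldots,T_k)$. (Case $t\ge 2n$.) Let $(S_1,\ldots,S_k)=\Pi\mathit{Solve}(n-2k,\,k,\,t-2(n-k)-1)$ and put $T_i=\{n-2k+i,\,n-(i-1)\}\cup S_i$ for $1\le i\le k$. Return $(T_1,\ldots,T_k)$. *)

theory Defs
  imports Main
begin

text \<open>The procedure terminates on
  input (n,k,t) with output T iff pisolve n k t T is derivable.  Lists are
  0-indexed: the paper's S_j is S ! (j-1), and the output list is (T_1,...,T_k)
  given as map T [1..k].\<close>

inductive pisolve :: "int \<Rightarrow> int \<Rightarrow> int \<Rightarrow> int set list \<Rightarrow> bool" where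
  base0: "pisolve n 0 t []"
| base1: "pisolve n 1 t [{1..n}]"
| even: "\<lbrakk> k \<noteq> 0; k \<noteq> 1; t \<le> 2*n - 1; even t;
           a = (2*n - t) div 2;
           pisolve (t - n - 1) (2*(k - n) + t - 1) (t div 2) S \<rbrakk> \<Longrightarrow>
         pisolve n k t
           (map (\<lambda>i. if i \<le> a then {t - n + (i - 1), n - (i - 1)}
                     else if i = a + 1 then {t div 2} \<union> S ! 0
                     else S ! nat (2*(i - a) - 3) \<union> S ! nat (2*(i - a) - 2)) [1..k])"
| odd: "\<lbrakk> k \<noteq> 0; k \<noteq> 1; t \<le> 2*n - 1; odd t;
          a = (2*n - t + 1) div 2;
          pisolve (t - n - 1) (k - a) t S \<rbrakk> \<Longrightarrow>
        pisolve n k t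
          (map (\<lambda>i. if i \<le> a then {t - n + (i - 1), n - (i - 1)}
                    else S ! nat (i - a - 1)) [1..k])"
| big: "\<lbrakk> k \<noteq> 0; k \<noteq> 1; t \<ge> 2*n;
          pisolve (n - 2*k) k (t - 2*(n - k) - 1) S \<rbrakk> \<Longrightarrow>
        pisolve n k t
          (map (\<lambda>i. {n - 2*k + i, n - (i - 1)} \<union> S ! nat (i - 1)) [1..k])"

definition kt_partitioning :: "int \<Rightarrow> nat \<Rightarrow> int \<Rightarrow> int set list \<Rightarrow> bool" where
  "kt_partitioning n k t T \<longleftrightarrow>
     length T = k \<and>
     (\<forall>i<k. \<forall>j<k. i \<noteq> j \<longrightarrow> T ! i \<inter> T ! j = {}) \<and>
     \<Union>(set T) = {1..n} \<and>
     (\<forall>j<k. (\<Sum>x\<in>T ! j. x) = t)"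

end

theory Submission
  imports Defs
begin


definition goodf :: "int \<Rightarrow> int \<Rightarrow> int \<Rightarrow> (int \<Rightarrow> int set) \<Rightarrow> bool" where
"goodf n k t f \<longleftrightarrow> (\<forall>i\<in>{1..k}. \<forall>j\<in>{1..k}. i \<noteq> j \<longrightarrow> f i \<inter> f j = {}) \<and>
   {1..n} \<subseteq> (\<Union>i\<in>{1..k}. f i) \<and> (\<forall>i\<in>{1..k}. f i \<subseteq> {0..n} \<and> (\<Sum>x\<in>f i. x) = t)"

definition good :: "int \<Rightarrow> int \<Rightarrow> int \<Rightarrow> int set list \<Rightarrow> bool" where
"good n k t T \<longleftrightarrow> length T = nat k \<and>
              (\<forall>i<length T. \<forall>j<length T. i \<noteq> j \<longrightarrow> T ! i \<inter> T ! j = {}) \<and>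
              {1..n} \<subseteq> \<Union>(set T) \<and> \<Union>(set T) \<subseteq> {0..n} \<and>
              (\<forall>j<length T. (\<Sum>x\<in>T ! j. x) = t)"

lemma good_map:
  assumes "0 \<le> k" "goodf n k t f"
  shows "good n k t (map f [1..k])"
proof -
  have nth: "map f [1..k] ! j = f (1 + int j)" if "j < nat k" for j
    using that assms(1) by simp
  have U: "\<Union>(set (map f [1..k])) = (\<Union>i\<in>{1..k}. f i)" by simp
  show ?thesis unfolding good_def U
  proof (intro conjI allI impI)
    show "length (map f [1..k]) = nat k" by simp
  next
    fix i j assume "i < length (map f [1..k])" "j < length (map f [1..k])" "i \<noteq> j"
    then show "map f [1..k] ! i \<inter> map f [1..k] ! j = {}"
      using assms(2) nth unfolding goodf_def by auto
  next
    show "{1..n} \<subseteq> (\<Union>i\<in>{1..k}. f i)" using assms(2) unfolding goodf_def by auto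
  next
    show "(\<Union>i\<in>{1..k}. f i) \<subseteq> {0..n}" using assms(2) unfolding goodf_def by auto
  next
    fix j assume "j < length (map f [1..k])"
    then show "(\<Sum>x\<in>map f [1..k] ! j. x) = t"
      using assms(2) nth unfolding goodf_def by auto
  qed
qed

lemma map_nth_upto:
  assumes "length S = nat k"
  shows "S = map (\<lambda>i. S ! nat (i - 1)) [1..k]"
  by (rule nth_equalityI) (use assms in auto)

lemma good_goodf:
  assumes "good n k t S"
  shows "goodf n k t (\<lambda>i. S ! nat (i - 1))"
proof -
  have L: "length S = nat k" using assms good_def by auto
  have S: "S = map (\<lambda>i. S ! nat (i - 1)) [1..k]" using map_nth_upto[OF L] .
  have U: "\<Union>(set S) = (\<Union>i\<in>{1..k}. S ! nat (i - 1))"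
    by (subst S) simp
  have mem: "i \<in> {1..k} \<Longrightarrow> nat (i - 1) < length S" for i using L by auto
  show ?thesis unfolding goodf_def
  proof (intro conjI ballI impI)
    fix i j assume "i \<in> {1..k}" "j \<in> {1..k}" "i \<noteq> j"
    moreover have "nat (i - 1) \<noteq> nat (j - 1)" using calculation by auto
    ultimately show "S ! nat (i - 1) \<inter> S ! nat (j - 1) = {}" using assms mem unfolding good_def by blast
  next
    show "{1..n} \<subseteq> (\<Union>i\<in>{1..k}. S ! nat (i - 1))" using assms U unfolding good_def by auto
  next
    fix i assume "i \<in> {1..k}"
    then show "S ! nat (i - 1) \<subseteq> {0..n}" using assms U unfolding good_def by blast
  next
    fix i assume "i \<in> {1..k}"
    then show "(\<Sum>x\<in>S ! nat (i - 1). x) = t" using assms mem unfolding good_def by auto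
  qed
qed

lemma gauss_int: "0 \<le> n \<Longrightarrow> 2 * (\<Sum>x\<in>{1..n::int}. x) = n * (n + 1)"
proof (induction n rule: int_ge_induct)
  case base then show ?case by simp
next
  case (step i)
  have "{1..i+1} = insert (i+1) {1..i}" using step by auto
  then show ?case using step by (simp add: algebra_simps)
qed


lemma sum_pair_ins:
  assumes "finite G" "a \<notin> G" "b \<notin> G" "a \<noteq> b"
  shows "(\<Sum>x\<in>{a, b} \<union> G. x) = a + b + (\<Sum>x\<in>G. (x::int))"
  using assms by simp

lemma big_step:
  assumes g: "goodf (n-2*k) k t' g" and tt: "t' = t - 2*(n-k) - 1" and nk: "0 \<le> n - 2*k"
  shows "goodf n k t (\<lambda>i. {n-2*k+i, n-(i-1)} \<union> g i)"
proof -
  have gs: "\<And>i. i \<in> {1..k} \<Longrightarrow> g i \<subseteq> {0..n-2*k}" and gsum: "\<And>i. i \<in> {1..k} \<Longrightarrow> (\<Sum>x\<in>g i. x) = t'"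
    and gd: "\<And>i j. i \<in> {1..k} \<Longrightarrow> j \<in> {1..k} \<Longrightarrow> i \<noteq> j \<Longrightarrow> g i \<inter> g j = {}"
    and gc: "{1..n-2*k} \<subseteq> (\<Union>i\<in>{1..k}. g i)"
    using g unfolding goodf_def by auto
  show ?thesis unfolding goodf_def
  proof (intro conjI ballI impI)
    fix i j assume ij: "i \<in> {1..k}" "j \<in> {1..k}" "i \<noteq> j"
    show "({n-2*k+i, n-(i-1)} \<union> g i) \<inter> ({n-2*k+j, n-(j-1)} \<union> g j) = {}"
    proof (rule ccontr)
      assume "\<not> ?thesis"
      then obtain x where x1: "x \<in> {n-2*k+i, n-(i-1)} \<union> g i" and x2: "x \<in> {n-2*k+j, n-(j-1)} \<union> g j" by blast
      show False
      proof (cases "x \<in> g i")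
        case True
        then have "x \<le> n - 2*k" using gs[OF ij(1)] by auto
        then have "x \<in> g j" using x2 ij by auto
        then show False using True gd[OF ij] by blast
      next
        case False
        then have "x = n-2*k+i \<or> x = n-(i-1)" using x1 by auto
        moreover have "x \<in> g j \<Longrightarrow> x \<le> n - 2*k" using gs[OF ij(2)] by auto
        ultimately show False using x2 ij by auto
      qed
    qed
  next
    show "{1..n} \<subseteq> (\<Union>i\<in>{1..k}. {n-2*k+i, n-(i-1)} \<union> g i)"
    proof
      fix x assume x: "x \<in> {1..n}"
      show "x \<in> (\<Union>i\<in>{1..k}. {n-2*k+i, n-(i-1)} \<union> g i)"
      proof (cases "x \<le> n - 2*k")
        case True then show ?thesis using gc x by auto
      next
        case False
        show ?thesis
        proof (cases "x \<le> n - k")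
          case True
          then show ?thesis using False x by (intro UN_I[of "x - n + 2*k"]) auto
        next
          case F2: False
          then show ?thesis using False x by (intro UN_I[of "n - x + 1"]) auto
        qed
      qed
    qed
  next
    fix i assume i: "i \<in> {1..k}"
    show "{n-2*k+i, n-(i-1)} \<union> g i \<subseteq> {0..n}" using gs[OF i] i nk by auto
    have fin: "finite (g i)" using gs[OF i] finite_subset by blast
    have "(\<Sum>x\<in>{n-2*k+i, n-(i-1)} \<union> g i. x) = (n-2*k+i) + (n-(i-1)) + (\<Sum>x\<in>g i. x)"
      by (rule sum_pair_ins) (use fin gs[OF i] i in auto)
    then show "(\<Sum>x\<in>{n-2*k+i, n-(i-1)} \<union> g i. x) = t" using gsum[OF i] tt by simp
  qed
qed



lemma odd_step:
  assumes g: "goodf (t-n-1) (k-a) t g" and tm: "t = 2*m+1" and am: "a = n - m"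
    and nt: "n \<le> t" and tn: "t \<le> 2*n - 1" and ka: "a \<le> k"
  shows "goodf n k t (\<lambda>i. if i \<le> a then {t-n+(i-1), n-(i-1)} else g (i-a))"
proof -
  have gs: "\<And>i. i \<in> {1..k-a} \<Longrightarrow> g i \<subseteq> {0..t-n-1}" and gsum: "\<And>i. i \<in> {1..k-a} \<Longrightarrow> (\<Sum>x\<in>g i. x) = t"
    and gd: "\<And>i j. i \<in> {1..k-a} \<Longrightarrow> j \<in> {1..k-a} \<Longrightarrow> i \<noteq> j \<Longrightarrow> g i \<inter> g j = {}"
    and gc: "{1..t-n-1} \<subseteq> (\<Union>i\<in>{1..k-a}. g i)"
    using g unfolding goodf_def by auto
  let ?f = "(\<lambda>i. if i \<le> a then {t-n+(i-1), n-(i-1)} else g (i-a))"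
  show ?thesis unfolding goodf_def
  proof (intro conjI ballI impI)
    fix i j assume ij: "i \<in> {1..k}" "j \<in> {1..k}" "i \<noteq> j"
    show "?f i \<inter> ?f j = {}"
    proof (cases "i \<le> a")
      case True
      show ?thesis
      proof (cases "j \<le> a")
        case True
        then show ?thesis using \<open>i \<le> a\<close> ij tm am by auto
      next
        case False
        have "g (j-a) \<subseteq> {0..t-n-1}" using gs False ij by auto
        then show ?thesis using \<open>i \<le> a\<close> False ij tm am tn by fastforce
      qed
    next
      case False
      show ?thesis
      proof (cases "j \<le> a")
        case True
        have "g (i-a) \<subseteq> {0..t-n-1}" using gs False ij by auto
        then show ?thesis using True False ij tm am tn by fastforce
      next
        case F2: False
        have "g (i-a) \<inter> g (j-a) = {}" using gd F2 False ij by auto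
        then show ?thesis using F2 False by auto
      qed
    qed
  next
    show "{1..n} \<subseteq> (\<Union>i\<in>{1..k}. ?f i)"
    proof
      fix x assume x: "x \<in> {1..n}"
      show "x \<in> (\<Union>i\<in>{1..k}. ?f i)"
      proof (cases "x \<le> t-n-1")
        case True
        then obtain p where p: "p \<in> {1..k-a}" "x \<in> g p" using gc x by auto
        then show ?thesis using tm am tn by (intro UN_I[of "p + a"]) auto
      next
        case False
        show ?thesis
        proof (cases "x \<le> m")
          case True
          then show ?thesis using False x tm am ka by (intro UN_I[of "x - t + n + 1"]) auto
        next
          case F2: False
          then show ?thesis using False x tm am ka by (intro UN_I[of "n - x + 1"]) auto
        qed
      qed
    qed
  next
    fix i assume i: "i \<in> {1..k}"
    show "?f i \<subseteq> {0..n}"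
    proof (cases "i \<le> a")
      case True then show ?thesis using i tm am nt by auto
    next
      case False then show ?thesis using gs[of "i-a"] i tn by auto
    qed
    show "(\<Sum>x\<in>?f i. x) = t"
    proof (cases "i \<le> a")
      case True
      have "t-n+(i-1) \<noteq> n-(i-1)" using True tm am by auto
      then show ?thesis using True by simp
    next
      case False then show ?thesis using gsum[of "i-a"] i by auto
    qed
  qed
qed


lemma even_step:
  assumes g: "goodf (t-n-1) (2*(k-a)-1) m g" and tm: "t = 2*m" and am: "a = n - m"
    and nt: "n \<le> t" and tn: "t \<le> 2*n - 1" and ka: "a < k"
  shows "goodf n k t (\<lambda>i. if i \<le> a then {t-n+(i-1), n-(i-1)} else if i = a + 1 then {m} \<union> g 1
      else g (2*(i-a)-2) \<union> g (2*(i-a)-1))"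
proof -
  let ?K = "2*(k-a)-1"
  have gs: "\<And>i. i \<in> {1..?K} \<Longrightarrow> g i \<subseteq> {0..t-n-1}" and gsum: "\<And>i. i \<in> {1..?K} \<Longrightarrow> (\<Sum>x\<in>g i. x) = m"
    and gd: "\<And>i j. i \<in> {1..?K} \<Longrightarrow> j \<in> {1..?K} \<Longrightarrow> i \<noteq> j \<Longrightarrow> g i \<inter> g j = {}"
    and gc: "{1..t-n-1} \<subseteq> (\<Union>i\<in>{1..?K}. g i)"
    using g unfolding goodf_def by auto
  have gm: "m \<notin> g i" if i: "i \<in> {1..?K}" for i
  proof
    assume "m \<in> g i"
    then have "m \<le> t-n-1" using gs[OF i] by auto
    then show False using tm tn by linarith
  qed
  let ?f = "(\<lambda>i. if i \<le> a then {t-n+(i-1), n-(i-1)} else if i = a + 1 then {m} \<union> g 1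
      else g (2*(i-a)-2) \<union> g (2*(i-a)-1))"
  define idx where "idx i = (if i = a + 1 then {1} else {2*(i-a)-2, 2*(i-a)-1})" for i
  have fi: "i > a \<Longrightarrow> ?f i = (if i = a + 1 then {m} else {}) \<union> (\<Union>p\<in>idx i. g p)" for i
    unfolding idx_def by auto
  have idxK: "i \<in> {a+1..k} \<Longrightarrow> idx i \<subseteq> {1..?K}" for i unfolding idx_def by auto
  have idxd: "i \<in> {a+1..k} \<Longrightarrow> j \<in> {a+1..k} \<Longrightarrow> p \<in> idx i \<Longrightarrow> p \<in> idx j \<Longrightarrow> i = j" for i j p
    unfolding idx_def by (auto split: if_splits)
  have big: "?f i \<subseteq> {m} \<union> {0..t-n-1}" if that: "a < i" "i \<le> k" for i
  proof
    fix x assume x: "x \<in> ?f i"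
    have "x = m \<or> (\<exists>p\<in>idx i. x \<in> g p)" using x fi[OF that(1)] by (auto split: if_splits)
    then show "x \<in> {m} \<union> {0..t-n-1}"
    proof
      assume "x = m" thus ?thesis by simp
    next
      assume "\<exists>p\<in>idx i. x \<in> g p"
      then obtain p where p: "p \<in> idx i" "x \<in> g p" by blast
      then have "p \<in> {1..?K}" using idxK[of i] that by auto
      then show ?thesis using gs p(2) by blast
    qed
  qed
  show ?thesis unfolding goodf_def
  proof (intro conjI ballI impI)
    fix i j assume ij: "i \<in> {1..k}" "j \<in> {1..k}" "i \<noteq> j"
    show "?f i \<inter> ?f j = {}"
    proof (cases "i \<le> a")
      case True
      show ?thesis
      proof (cases "j \<le> a")
        case True
        then show ?thesis using \<open>i \<le> a\<close> ij tm am by auto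
      next
        case False
        have "?f j \<subseteq> {m} \<union> {0..t-n-1}" using big False ij by auto
        then show ?thesis using \<open>i \<le> a\<close> ij tm am by auto
      qed
    next
      case False
      show ?thesis
      proof (cases "j \<le> a")
        case True
        have "?f i \<subseteq> {m} \<union> {0..t-n-1}" using big False ij by auto
        then show ?thesis using True ij tm am by auto
      next
        case F2: False
        show ?thesis
        proof (rule ccontr)
          assume "\<not> ?thesis"
          then obtain x where x1: "x \<in> ?f i" and x2: "x \<in> ?f j" by blast
          show False
          proof (cases "x = m")
            case True
            have "\<forall>p\<in>idx i. x \<notin> g p" using gm idxK[of i] False ij True by auto
            then have "i = a + 1" using x1 fi[of i] False by (auto split: if_splits)
            have "\<forall>p\<in>idx j. x \<notin> g p" using gm idxK[of j] F2 ij True by auto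
            then have "j = a + 1" using x2 fi[of j] F2 by (auto split: if_splits)
            then show False using \<open>i = a + 1\<close> ij by auto
          next
            case xm: False
            obtain p where p: "p \<in> idx i" "x \<in> g p" using x1 fi[of i] False xm by (auto split: if_splits)
            obtain q where q: "q \<in> idx j" "x \<in> g q" using x2 fi[of j] F2 xm by (auto split: if_splits)
            have "i \<in> {a+1..k}" "j \<in> {a+1..k}" using False F2 ij by auto
            then have pK: "p \<in> {1..?K}" "q \<in> {1..?K}" using p(1) q(1) idxK by blast+
            have "p = q" using gd[OF pK] p q by blast
            then show False using idxd[of i j p] p q False F2 ij by auto
          qed
        qed
      qed
    qed
  next
    show "{1..n} \<subseteq> (\<Union>i\<in>{1..k}. ?f i)"
    proof
      fix x assume x: "x \<in> {1..n}"
      show "x \<in> (\<Union>i\<in>{1..k}. ?f i)"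
      proof (cases "x \<le> t-n-1")
        case True
        then obtain p where p: "p \<in> {1..?K}" "x \<in> g p" using gc x by auto
        show ?thesis
        proof (cases "p = 1")
          case True
          then show ?thesis using p ka tm am tn by (intro UN_I[of "a + 1"]) auto
        next
          case False
          define i where "i = a + 1 + p div 2"
          have "p = 2*(i-a)-2 \<or> p = 2*(i-a)-1" unfolding i_def using False p by presburger
          moreover have "i \<in> {1..k}" "\<not> i \<le> a" "i \<noteq> a + 1" unfolding i_def using False p ka tm am tn by auto
          ultimately show ?thesis using p by (intro UN_I[of i]) auto
        qed
      next
        case False
        show ?thesis
        proof (cases "x < m")
          case True
          then show ?thesis using False x tm am ka by (intro UN_I[of "x - t + n + 1"]) auto
        next
          case F2: False
          show ?thesis
          proof (cases "x = m")
            case True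
            then show ?thesis using ka am tm tn by (intro UN_I[of "a + 1"]) auto
          next
            case False
            then show ?thesis using F2 x tm am ka by (intro UN_I[of "n - x + 1"]) auto
          qed
        qed
      qed
    qed
  next
    fix i assume i: "i \<in> {1..k}"
    show "?f i \<subseteq> {0..n}"
    proof (cases "i \<le> a")
      case True
      have e: "?f i = {t-n+(i-1), n-(i-1)}" using True by simp
      have "0 \<le> t-n+(i-1)" "t-n+(i-1) \<le> n" "0 \<le> n-(i-1)" "n-(i-1) \<le> n"
        using True i tm am nt by auto
      then show ?thesis unfolding e by simp
    next
      case False
      have s1: "{m} \<union> {0..t-n-1} \<subseteq> {0..n}" using tn tm nt by auto
      have "a < i" "i \<le> k" using False i by auto
      then show ?thesis using big s1 by (meson order_trans)
    qed
    show "(\<Sum>x\<in>?f i. x) = t"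
    proof (cases "i \<le> a")
      case True
      have "t-n+(i-1) \<noteq> n-(i-1)" using True tm am by auto
      then show ?thesis using True by simp
    next
      case False
      show ?thesis
      proof (cases "i = a + 1")
        case True
        have K1: "1 \<in> {1..?K}" using ka by auto
        have fin: "finite (g 1)" using finite_subset[OF gs[OF K1]] by simp
        have "(\<Sum>x\<in>?f i. x) = (\<Sum>x\<in>insert m (g 1). x)" using True by simp
        also have "\<dots> = m + m" using gm[OF K1] fin gsum[OF K1] by simp
        finally show ?thesis using tm by simp
      next
        case F2: False
        let ?p = "2*(i-a)-2" and ?q = "2*(i-a)-1"
        have pK: "?p \<in> {1..?K}" "?q \<in> {1..?K}" using i False F2 by auto
        have fin: "finite (g ?p)" "finite (g ?q)" using finite_subset[OF gs[OF pK(1)]] finite_subset[OF gs[OF pK(2)]] by simp_all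
        have dj: "g ?p \<inter> g ?q = {}" using gd[OF pK] by auto
        have "(\<Sum>x\<in>?f i. x) = (\<Sum>x\<in>g ?p \<union> g ?q. x)" using False F2 by simp
        also have "\<dots> = (\<Sum>x\<in>g ?p. x) + (\<Sum>x\<in>g ?q. x)" by (rule sum.union_disjoint[OF fin dj])
        also have "\<dots> = m + m" using gsum[OF pK(1)] gsum[OF pK(2)] by simp
        finally show ?thesis using tm by simp
      qed
    qed
  qed
qed



lemma n_pos:
  assumes "2 \<le> k" "1 \<le> t" "-1 \<le> n" "2*(k*t) = n*(n+1)"
  shows "1 \<le> (n::int)"
proof (rule ccontr)
  assume "\<not> 1 \<le> n"
  then have "n = 0 \<or> n = -1" using assms(3) by auto
  then have "k*t = 0" using assms(4) by auto
  moreover have "k*t > 0" using assms(1,2) by simp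
  ultimately show False using assms(1,2) by simp
qed

lemma arith_even:
  fixes n k t m :: int
  assumes k2: "2 \<le> k" and t1: "1 \<le> t" and nt: "n \<le> t" and n1: "-1 \<le> n"
    and e: "2*(k*t) = n*(n+1)" and tn: "t \<le> 2*n-1" and ev: "t = 2*m"
  shows "n - m < k" "0 \<le> 2*(k-n)+t-1" "1 \<le> m" "t-n-1 \<le> m" "-1 \<le> t-n-1"
    "2*((2*(k-n)+t-1)*m) = (t-n-1)*(t-n-1+1)" "t - n - 1 < n"
proof -
  have n0: "1 \<le> n" using n_pos[OF k2 t1 n1 e] .
  have key: "t*(2*(k-(n-m))) = (t-n)^2 + n" using e ev by (simp add: algebra_simps power2_eq_square)
  have "(t-n)^2 + n > 0" using n0 by (smt (verit) zero_le_power2)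
  then have "t*(2*(k-(n-m))) > 0" using key by simp
  then have "2*(k-(n-m)) > 0" using t1 by (simp add: zero_less_mult_iff)
  then show "n - m < k" by simp
  then show "0 \<le> 2*(k-n)+t-1" using ev by simp
  show "1 \<le> m" "t-n-1 \<le> m" "-1 \<le> t-n-1" "t - n - 1 < n" using ev t1 tn nt n0 by auto
  show "2*((2*(k-n)+t-1)*m) = (t-n-1)*(t-n-1+1)" using e ev by (simp add: algebra_simps)
qed

lemma arith_odd:
  fixes n k t m :: int
  assumes k2: "2 \<le> k" and t1: "1 \<le> t" and nt: "n \<le> t" and n1: "-1 \<le> n"
    and e: "2*(k*t) = n*(n+1)" and tn: "t \<le> 2*n-1" and od: "t = 2*m+1"
  shows "n - m \<le> k" "-1 \<le> t-n-1" "t-n-1 \<le> t"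
    "2*((k-(n-m))*t) = (t-n-1)*(t-n-1+1)" "t - n - 1 < n"
proof -
  have n0: "1 \<le> n" using n_pos[OF k2 t1 n1 e] .
  have key: "2*((k-(n-m))*t) = (t-n)*(t-n-1)" using e od by (simp add: algebra_simps)
  have "(t-n)*(t-n-1) \<ge> 0"
  proof (cases "t = n")
    case True then show ?thesis by simp
  next
    case False then show ?thesis using nt by simp
  qed
  then have "(k-(n-m))*t \<ge> 0" using key by simp
  then have "k-(n-m) \<ge> 0" using t1 by (simp add: zero_le_mult_iff)
  then show "n - m \<le> k" by simp
  show "-1 \<le> t-n-1" "t-n-1 \<le> t" "t - n - 1 < n" using t1 tn nt n0 by auto
  show "2*((k-(n-m))*t) = (t-n-1)*(t-n-1+1)" using key by (simp add: algebra_simps)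
qed

lemma arith_big:
  fixes n k t :: int
  assumes k2: "2 \<le> k" and t1: "1 \<le> t" and nt: "n \<le> t" and n1: "-1 \<le> n"
    and e: "2*(k*t) = n*(n+1)" and tn: "2*n \<le> t"
  shows "0 \<le> n - 2*k" "1 \<le> t - 2*(n-k) - 1" "n - 2*k \<le> t - 2*(n-k) - 1" "-1 \<le> n - 2*k"
    "2*(k*(t - 2*(n-k) - 1)) = (n-2*k)*(n-2*k+1)" "n - 2*k < n"
proof -
  have n0: "1 \<le> n" using n_pos[OF k2 t1 n1 e] .
  have "2*(k*(2*n)) \<le> 2*(k*t)" using tn k2 by simp
  then have "n*(4*k) \<le> n*(n+1)" using e by (simp add: algebra_simps)
  then have "4*k \<le> n+1" using n0 by simp
  then show "0 \<le> n - 2*k" "-1 \<le> n - 2*k" using n0 by auto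
  show "1 \<le> t - 2*(n-k) - 1" using tn k2 by simp
  have key: "t*((t - 2*(n-k) - 1) - (n - 2*k)) = (t-2*n)*(t-n-1)" using e by (simp add: algebra_simps)
  have "(t-2*n)*(t-n-1) \<ge> 0" using tn n0 by simp
  then have "t*((t - 2*(n-k) - 1) - (n - 2*k)) \<ge> 0" using key by simp
  then have "(t - 2*(n-k) - 1) - (n - 2*k) \<ge> 0" using t1 by (simp add: zero_le_mult_iff)
  then show "n - 2*k \<le> t - 2*(n-k) - 1" by simp
  show "2*(k*(t - 2*(n-k) - 1)) = (n-2*k)*(n-2*k+1)" using e by (simp add: algebra_simps)
  show "n - 2*k < n" using k2 by simp
qed



lemma correct:
  "pisolve n k t T \<Longrightarrow> 0 \<le> k \<Longrightarrow> 1 \<le> t \<Longrightarrow> n \<le> t \<Longrightarrow> -1 \<le> n \<Longrightarrow> 2*(k*t) = n*(n+1)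
   \<Longrightarrow> good n k t T"
proof (induction rule: pisolve.induct)
  case (base0 n t)
  then have "n*(n+1) = 0" by simp
  then have "n \<le> 0" by (auto simp: mult_eq_0_iff)
  then show ?case unfolding good_def by auto
next
  case (base1 n t)
  have "n*(n+1) = 2*t" using base1 by simp
  then have n0: "0 \<le> n" using base1 by (cases "n = -1") auto
  have gs: "2*(\<Sum>x\<in>{1..n}. x) = n*(n+1)" using gauss_int[OF n0] .
  then have "(\<Sum>x\<in>{1..n}. x) = t" using base1 by simp
  then show ?case unfolding good_def using n0 by auto
next
  case (even k t n a S)
  obtain m where tm: "t = 2*m" using \<open>even t\<close> by (auto elim: evenE)
  have k2: "2 \<le> k" using even by simp
  note ar = arith_even[OF k2 even.prems(2,3,4,5) even.hyps(3) tm]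
  have tdm: "t div 2 = m" using tm by simp
  have am: "a = n - m" using even.hyps(5) tm by simp
  have "good (t-n-1) (2*(k-n)+t-1) (t div 2) S"
    using even.IH ar tdm by simp
  then have g0: "goodf (t-n-1) (2*(k-n)+t-1) m (\<lambda>i. S ! nat (i - 1))" using good_goodf tdm by simp
  have eq: "2*(k-n)+t-1 = 2*(k-a)-1" using am tm by simp
  have g: "goodf (t-n-1) (2*(k-a)-1) m (\<lambda>i. S ! nat (i - 1))" using g0 unfolding eq .
  have st: "goodf n k t (\<lambda>i. if i \<le> a then {t-n+(i-1), n-(i-1)} else if i = a + 1 then {m} \<union> S ! nat (1 - 1)
      else S ! nat (2*(i-a)-2 - 1) \<union> S ! nat (2*(i-a)-1 - 1))"
    by (rule even_step[OF g tm am even.prems(3) even.hyps(3)]) (use ar am in simp)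
  have "good n k t (map (\<lambda>i. if i \<le> a then {t-n+(i-1), n-(i-1)} else if i = a + 1 then {m} \<union> S ! nat (1 - 1)
      else S ! nat (2*(i-a)-2 - 1) \<union> S ! nat (2*(i-a)-1 - 1)) [1..k])"
    using good_map[OF even.prems(1) st] .
  moreover have "map (\<lambda>i. if i \<le> a then {t-n+(i-1), n-(i-1)} else if i = a + 1 then {m} \<union> S ! nat (1 - 1)
      else S ! nat (2*(i-a)-2 - 1) \<union> S ! nat (2*(i-a)-1 - 1)) [1..k] =
     map (\<lambda>i. if i \<le> a then {t - n + (i - 1), n - (i - 1)}
                     else if i = a + 1 then {t div 2} \<union> S ! 0
                     else S ! nat (2*(i - a) - 3) \<union> S ! nat (2*(i - a) - 2)) [1..k]"
  proof (rule map_cong[OF refl])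
    fix i assume "i \<in> set [1..k]"
    have "2*(i-a)-2 - 1 = 2*(i - a) - 3" "2*(i-a)-1 - 1 = 2*(i - a) - 2" by simp_all
    then show "(if i \<le> a then {t-n+(i-1), n-(i-1)} else if i = a + 1 then {m} \<union> S ! nat (1 - 1)
      else S ! nat (2*(i-a)-2 - 1) \<union> S ! nat (2*(i-a)-1 - 1)) =
      (if i \<le> a then {t - n + (i - 1), n - (i - 1)}
                     else if i = a + 1 then {t div 2} \<union> S ! 0
                     else S ! nat (2*(i - a) - 3) \<union> S ! nat (2*(i - a) - 2))"
      using tdm by simp
  qed
  ultimately show ?case by simp
next
  case (odd k t n a S)
  obtain m where tm: "t = 2*m+1" using \<open>odd t\<close> by (auto elim: oddE)
  have k2: "2 \<le> k" using odd by simp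
  note ar = arith_odd[OF k2 odd.prems(2,3,4,5) odd.hyps(3) tm]
  have am: "a = n - m" using odd.hyps(5) tm by simp
  have "good (t-n-1) (k-a) t S"
    using odd.IH ar am odd.prems by simp
  then have g: "goodf (t-n-1) (k-a) t (\<lambda>i. S ! nat (i - 1))" using good_goodf by simp
  have st: "goodf n k t (\<lambda>i. if i \<le> a then {t-n+(i-1), n-(i-1)} else S ! nat (i - a - 1))"
    by (rule odd_step[OF g tm am odd.prems(3) odd.hyps(3)]) (use ar am in simp)
  show ?case using good_map[OF odd.prems(1) st] .
next
  case (big k t n S)
  have k2: "2 \<le> k" using big by simp
  note ar = arith_big[OF k2 big.prems(2,3,4,5) big.hyps(3)]
  have "good (n - 2*k) k (t - 2*(n-k) - 1) S"
    using big.IH ar big.prems by simp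
  then have g: "goodf (n - 2*k) k (t - 2*(n-k) - 1) (\<lambda>i. S ! nat (i - 1))" using good_goodf by simp
  have st: "goodf n k t (\<lambda>i. {n-2*k+i, n-(i-1)} \<union> S ! nat (i - 1))"
    by (rule big_step[OF g refl ar(1)])
  show ?case using good_map[OF big.prems(1) st] .
qed

lemma exists:
  "0 \<le> k \<Longrightarrow> 1 \<le> t \<Longrightarrow> n \<le> t \<Longrightarrow> -1 \<le> n \<Longrightarrow> 2*(k*t) = n*(n+1) \<Longrightarrow> \<exists>T. pisolve n k t T"
proof (induction "nat (n+1)" arbitrary: n k t rule: less_induct)
  case less
  show ?case
  proof (cases "k = 0 \<or> k = 1")
    case True
    then show ?thesis using pisolve.base0 pisolve.base1 by blast
  next
    case False
    then have k2: "2 \<le> k" using less.prems by auto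
    show ?thesis
    proof (cases "t \<le> 2*n - 1")
      case tn: True
      show ?thesis
      proof (cases "even t")
        case True
        obtain m where tm: "t = 2*m" using True by (auto elim: evenE)
        note ar = arith_even[OF k2 less.prems(2,3,4,5) tn tm]
        have "\<exists>S. pisolve (t - n - 1) (2*(k - n) + t - 1) (t div 2) S"
          using less.hyps[of "t-n-1" "2*(k - n) + t - 1" "t div 2"] ar tm by simp
        then obtain S where "pisolve (t - n - 1) (2*(k - n) + t - 1) (t div 2) S" by blast
        then show ?thesis using pisolve.even[OF _ _ tn True refl] False by blast
      next
        case od: False
        obtain m where tm: "t = 2*m+1" using od by (auto elim: oddE)
        note ar = arith_odd[OF k2 less.prems(2,3,4,5) tn tm]
        have am: "(2*n - t + 1) div 2 = n - m" using tm by simp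
        have "\<exists>S. pisolve (t - n - 1) (k - (2*n - t + 1) div 2) t S"
          using less.hyps[of "t-n-1" "k - (2*n - t + 1) div 2" t] ar am less.prems by simp
        then obtain S where "pisolve (t - n - 1) (k - (2*n - t + 1) div 2) t S" by blast
        then show ?thesis using pisolve.odd[OF _ _ tn od refl] False by blast
      qed
    next
      case tn: False
      then have tn': "2*n \<le> t" by simp
      note ar = arith_big[OF k2 less.prems(2,3,4,5) tn']
      have "\<exists>S. pisolve (n - 2*k) k (t - 2*(n-k) - 1) S"
        using less.hyps[of "n - 2*k" k "t - 2*(n-k) - 1"] ar less.prems by simp
      then obtain S where "pisolve (n - 2*k) k (t - 2*(n-k) - 1) S" by blast
      then show ?thesis using pisolve.big[OF _ _ tn'] False by blast
    qed
  qed
qed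

theorem mainTheorem1:
  fixes n k t :: int
  assumes "n > 0" and "k > 0" and "t > 0"
    and "2 * (k * t) = n * (n + 1)"
    and "t \<ge> n"
  shows "(\<exists>T. pisolve n k t T) \<and>
         (\<forall>T. pisolve n k t T \<longrightarrow>
              length T = nat k \<and>
              (\<forall>i<length T. \<forall>j<length T. i \<noteq> j \<longrightarrow> T ! i \<inter> T ! j = {}) \<and>
              {1..n} \<subseteq> \<Union>(set T) \<and> \<Union>(set T) \<subseteq> {0..n} \<and>
              (\<forall>j<length T. (\<Sum>x\<in>T ! j. x) = t) \<and>
              kt_partitioning n (nat k) t (map (\<lambda>S. S - {0}) T))"
proof (rule conjI)
  show "\<exists>T. pisolve n k t T" using exists assms by simp
next
  show "\<forall>T. pisolve n k t T \<longrightarrow>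
              length T = nat k \<and>
              (\<forall>i<length T. \<forall>j<length T. i \<noteq> j \<longrightarrow> T ! i \<inter> T ! j = {}) \<and>
              {1..n} \<subseteq> \<Union>(set T) \<and> \<Union>(set T) \<subseteq> {0..n} \<and>
              (\<forall>j<length T. (\<Sum>x\<in>T ! j. x) = t) \<and>
              kt_partitioning n (nat k) t (map (\<lambda>S. S - {0}) T)"
  proof (intro allI impI)
  fix T assume p: "pisolve n k t T"
  have G: "good n k t T" using correct[OF p] assms by simp
  have L: "length T = nat k" and D: "\<forall>i<length T. \<forall>j<length T. i \<noteq> j \<longrightarrow> T ! i \<inter> T ! j = {}"
    and C: "{1..n} \<subseteq> \<Union>(set T)" and U: "\<Union>(set T) \<subseteq> {0..n}" and Sm: "\<forall>j<length T. (\<Sum>x\<in>T ! j. x) = t"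
    using G unfolding good_def by auto
  have KT: "kt_partitioning n (nat k) t (map (\<lambda>S. S - {0}) T)"
    unfolding kt_partitioning_def
  proof (intro conjI allI impI)
    show "length (map (\<lambda>S. S - {0}) T) = nat k" using L by simp
  next
    fix i j assume "i < nat k" "j < nat k" "i \<noteq> j"
    then show "map (\<lambda>S. S - {0}) T ! i \<inter> map (\<lambda>S. S - {0}) T ! j = {}" using D L by auto
  next
    have "\<Union>(set (map (\<lambda>S. S - {0}) T)) = \<Union>(set T) - {0}" by auto
    then show "\<Union>(set (map (\<lambda>S. S - {0}) T)) = {1..n}" using C U by auto
  next
    fix j assume j: "j < nat k"
    then have jT: "j < length T" using L by simp
    have fin: "finite (T ! j)" using U jT by (meson finite_atLeastAtMost finite_subset nth_mem Union_upper order_trans)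
    have "(\<Sum>x\<in>T ! j - {0}. x) = (\<Sum>x\<in>T ! j. x)"
      using fin by (simp add: sum_diff1)
    then show "(\<Sum>x\<in>map (\<lambda>S. S - {0}) T ! j. x) = t" using Sm jT by simp
  qed
  show "length T = nat k \<and>
              (\<forall>i<length T. \<forall>j<length T. i \<noteq> j \<longrightarrow> T ! i \<inter> T ! j = {}) \<and>
              {1..n} \<subseteq> \<Union>(set T) \<and> \<Union>(set T) \<subseteq> {0..n} \<and>
              (\<forall>j<length T. (\<Sum>x\<in>T ! j. x) = t) \<and>
              kt_partitioning n (nat k) t (map (\<lambda>S. S - {0}) T)"
    using L D C U Sm KT by blast
  qed
qed

end
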